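(* Let $d\ge2$ and let $v=(v_1,\dots,v_d)\in\mathbb{R}^d$ satisfy $\sum_j v_j=1$ and $\sum_j v_j^2=d$. Let $v_{\max}=\max_j v_j$ and $v_{\min}=\min_j v_j$. Then $$\frac{(d-1)v_{\max}-(d+1)v_{\min}}{2}\le\frac{d-1}{\sqrt2\,d}\sqrt{(d+1)(d^2+d+2)}-\frac1d,$$ with equality if and only if the components of $v$ in nonincreasing order $v^\downarrow$ satisfy, with $s=\sqrt{\frac{d+1}{2(d^2+d+2)}}$, $$v^\downarrow_1=\frac1d+\frac{d^2-d+2}{d}s,\quad v^\downarrow_2=\dots=v^\downarrow_{d-1}=\frac1d+\frac2d s,\quad v^\downarrow_d=\frac1d-\frac{d^2+d-2}{d}s.$$ *)

theory Defs
  imports Complex_Main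
begin

definition sorted_desc :: "nat \<Rightarrow> (nat \<Rightarrow> real) \<Rightarrow> real list" where
  "sorted_desc d v = rev (sort (map v [0..<d]))"

end

theory Submission
  imports Defs "HOL-Library.Multiset"
begin

lemma key_identity:
  fixes D s vi vk :: real
  assumes "D \<ge> 2"
  shows "((vi-(1/D + (D^2-D+2)/D*s))^2 + (vk-(1/D - (D^2+D-2)/D*s))^2 + ((D - vi^2 - vk^2)
          - 2*(1/D + 2/D*s)*(1-vi-vk) + (D-2)*(1/D + 2/D*s)^2))*D/2
     = (D^2-1)/2 - 2*s - D*s*((D-1)*vi - (D+1)*vk) + (D-1)*(D^2+D+2)*s^2"
  using assms by (simp add: field_simps power2_eq_square)

theorem lemmaS3:
  fixes d :: nat and v :: "nat \<Rightarrow> real"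
  assumes "d \<ge> 2"
    and "(\<Sum>j<d. v j) = 1"
    and "(\<Sum>j<d. (v j)^2) = real d"
  defines "vmax \<equiv> Max (v ` {..<d})"
    and "vmin \<equiv> Min (v ` {..<d})"
    and "s \<equiv> sqrt ((real d + 1) / (2 * (real d ^ 2 + real d + 2)))"
    and "B \<equiv> (real d - 1) / (sqrt 2 * real d) * sqrt ((real d + 1) * (real d ^ 2 + real d + 2)) - 1 / real d"
  shows "((real d - 1) * vmax - (real d + 1) * vmin) / 2 \<le> B
         \<and> (((real d - 1) * vmax - (real d + 1) * vmin) / 2 = B
            \<longleftrightarrow> sorted_desc d v =
                 [1 / real d + (real d ^ 2 - real d + 2) / real d * s]
                 @ replicate (d - 2) (1 / real d + 2 / real d * s)
                 @ [1 / real d - (real d ^ 2 + real d - 2) / real d * s])"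
proof -
  define D where "D = real d"
  have D2: "D \<ge> 2" using assms(1) unfolding D_def by simp
  define \<sigma> where "\<sigma> = (D + 1) / (2 * (D ^ 2 + D + 2))"
  have sig_pos: "\<sigma> > 0" unfolding \<sigma>_def using D2 by (simp add: add_pos_pos)
  have s_def': "s = sqrt \<sigma>" unfolding s_def \<sigma>_def D_def by simp
  have spos: "s > 0" using sig_pos s_def' by simp
  have ssq: "s^2 = \<sigma>" using sig_pos s_def' by simp
  define U1 where "U1 = 1/D + (D^2-D+2)/D*s"
  define U2 where "U2 = 1/D - (D^2+D-2)/D*s"
  define C0 where "C0 = 1/D + 2/D*s"
  have ord1: "U2 \<le> C0" unfolding U2_def C0_def using D2 spos
    by (simp add: divide_right_mono mult_right_mono field_simps)
  have ord2: "C0 \<le> U1"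
  proof -
    have "2 \<le> D^2 - D + 2" using D2 by (simp add: power2_eq_square)
    then have "2/D*s \<le> (D^2-D+2)/D*s" using D2 spos
      by (intro mult_right_mono divide_right_mono) auto
    then show ?thesis unfolding U1_def C0_def by simp
  qed
  have Bform: "B = (D^2-1)/(2*D*s) - 1/D"
  proof -
    have x0: "(D - 1) / (sqrt 2 * D) * sqrt ((D + 1) * (D ^ 2 + D + 2)) \<ge> 0"
      using D2 by simp
    have "D^2 - 1 \<ge> 0" using mult_mono[OF D2 D2] D2 by (simp add: power2_eq_square)
    then have y0: "(D^2-1)/(2*D*s) \<ge> 0" using D2 spos by simp
    have "((D - 1) / (sqrt 2 * D) * sqrt ((D + 1) * (D ^ 2 + D + 2)))^2
          = (D-1)^2/(2*D^2) * ((D + 1) * (D ^ 2 + D + 2))"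
      using D2 by (simp add: power_mult_distrib power_divide)
    also have "\<dots> = (D^2-1)^2/(4*D^2*\<sigma>)"
    proof -
      have p: "D^2+D+2 > 0" "D + 1 > 0" "D > 0" using D2 by (auto intro!: add_pos_pos add_nonneg_pos)
      have "(D^2-1)^2 = (D-1)^2 * (D+1)^2" by (simp add: power2_eq_square algebra_simps)
      moreover have "(D-1)^2/(2*D^2) * ((D+1)*(D^2+D+2)) * (4*D^2*\<sigma>) = (D-1)^2*(D+1)^2"
      proof -
        have "\<And>P::real. P > 0 \<Longrightarrow> (D-1)^2/(2*D^2) * ((D+1)*P) * (4*D^2*((D+1)/(2*P))) = (D-1)^2*(D+1)^2"
          using p by (simp add: field_simps power2_eq_square)
        from this[OF p(1)] show ?thesis unfolding \<sigma>_def .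
      qed
      ultimately show ?thesis using p sig_pos by (simp add: eq_divide_eq)
    qed
    also have "\<dots> = ((D^2-1)/(2*D*s))^2" by (simp add: power_divide power_mult_distrib ssq)
    finally have "(D - 1) / (sqrt 2 * D) * sqrt ((D + 1) * (D ^ 2 + D + 2)) = (D^2-1)/(2*D*s)"
      using x0 y0 power2_eq_imp_eq by blast
    then show ?thesis unfolding B_def D_def by simp
  qed
  have fin: "finite (v ` {..<d})" and ne: "v ` {..<d} \<noteq> {}" using assms(1) by (auto simp: lessThan_empty_iff)
  obtain i where i: "i < d" "v i = vmax" using Max_in[OF fin ne] unfolding vmax_def by auto
  obtain k where k: "k < d" "v k = vmin" using Min_in[OF fin ne] unfolding vmin_def by auto
  have le_max: "\<And>j. j < d \<Longrightarrow> v j \<le> vmax" unfolding vmax_def using fin by auto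
  have ge_min: "\<And>j. j < d \<Longrightarrow> vmin \<le> v j" unfolding vmin_def using fin by auto
  have ik: "i \<noteq> k"
  proof
    assume "i = k"
    then have c: "\<And>j. j < d \<Longrightarrow> v j = v i" using le_max ge_min i k by force
    have "(\<Sum>j<d. v j) = D * v i" using c unfolding D_def by simp
    moreover have "(\<Sum>j<d. (v j)^2) = D * (v i)^2" using c unfolding D_def by simp
    ultimately have "D * v i = 1" "D * (v i)^2 = D" using assms(2,3) unfolding D_def by auto
    then have "(D * v i)^2 = 1" by simp
    then have "D * (D * (v i)^2) = 1" by (simp add: power2_eq_square algebra_simps)
    then have "D * D = 1" using \<open>D * (v i)^2 = D\<close> by simp
    then show False using mult_mono[OF D2 D2] D2 by simp
  qed
  define R where "R = {..<d} - {i, k}"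
  have finR: "finite R" unfolding R_def by simp
  have split: "\<And>f::nat\<Rightarrow>real. (\<Sum>j<d. f j) = f i + f k + sum f R"
  proof -
    fix f :: "nat \<Rightarrow> real"
    have e: "{..<d} = insert i (insert k R)" unfolding R_def using i k by auto
    have "i \<notin> insert k R" "k \<notin> R" unfolding R_def using ik by auto
    then show "(\<Sum>j<d. f j) = f i + f k + sum f R" using finR by (subst e) (simp add: algebra_simps)
  qed
  have cardR: "real (card R) = D - 2"
  proof -
    have "card R = d - 2" unfolding R_def using i k ik by (simp add: card_Diff_subset)
    then show ?thesis using assms(1) unfolding D_def by simp
  qed
  have sR1: "sum v R = 1 - v i - v k" using split[of v] assms(2) by simp
  have sR2: "(\<Sum>j\<in>R. (v j)^2) = D - (v i)^2 - (v k)^2"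
    using split[of "\<lambda>j. (v j)^2"] assms(3) unfolding D_def by simp
  have sRQ: "(\<Sum>j\<in>R. (v j - C0)^2) = (D - (v i)^2 - (v k)^2) - 2*C0*(1 - v i - v k) + (D-2)*C0^2"
  proof -
    have "(\<Sum>j\<in>R. (v j - C0)^2) = (\<Sum>j\<in>R. (v j)^2 - 2*C0*v j + C0^2)"
      by (simp add: power2_diff algebra_simps)
    also have "\<dots> = (\<Sum>j\<in>R. (v j)^2) - 2*C0*sum v R + real (card R) * C0^2"
      by (simp add: sum.distrib sum_subtractf sum_distrib_left)
    finally show ?thesis using sR1 sR2 cardR by simp
  qed
  define L where "L = ((D - 1) * vmax - (D + 1) * vmin) / 2"
  define Q where "Q = (v i - U1)^2 + (v k - U2)^2 + (\<Sum>j\<in>R. (v j - C0)^2)"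
  have Qid: "Q * D / 2 = D^2 - 1 - 2*s - 2*D*s*L"
  proof -
    have "Q * D / 2 = (D^2-1)/2 - 2*s - D*s*((D-1)*v i - (D+1)*v k) + (D-1)*(D^2+D+2)*s^2"
    proof -
      have "Q = (v i - U1)^2 + (v k - U2)^2 + ((D - (v i)^2 - (v k)^2) - 2*C0*(1 - v i - v k) + (D-2)*C0^2)"
        unfolding Q_def sRQ ..
      then show ?thesis unfolding U1_def U2_def C0_def by (simp only: key_identity[OF D2])
    qed
    also have "(D-1)*(D^2+D+2)*s^2 = (D^2-1)/2"
    proof -
      have Pp: "D^2+D+2 > 0" using D2 by (auto intro!: add_pos_pos add_nonneg_pos)
      have "\<And>P::real. P > 0 \<Longrightarrow> (D-1)*P*((D+1)/(2*P)) = (D^2-1)/2"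
        by (simp add: field_simps power2_eq_square)
      from this[OF Pp] show ?thesis unfolding ssq \<sigma>_def .
    qed
    finally show ?thesis unfolding L_def using i k by (simp add: field_simps)
  qed
  have Qnn: "Q \<ge> 0" unfolding Q_def by (intro add_nonneg_nonneg sum_nonneg) auto
  have Dp: "D > 0" using D2 by simp
  have Bform2: "B = (D^2-1-2*s)/(2*D*s)"
    unfolding Bform using Dp spos by (simp add: diff_divide_distrib)
  have Q2: "2*D*s*L = D^2 - 1 - 2*s - Q*D/2" using Qid by linarith
  have part1: "L \<le> B" unfolding Bform2 using Dp spos Qnn Q2
    by (simp add: pos_le_divide_eq mult.commute mult.left_commute)
  have Leq: "L = B \<longleftrightarrow> Q = 0"
  proof -
    have "L = B \<longleftrightarrow> L*(2*D*s) = D^2-1-2*s" unfolding Bform2 using Dp spos by (simp add: eq_divide_eq)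
    also have "\<dots> \<longleftrightarrow> Q*D/2 = 0" using Q2 by (simp add: mult.commute mult.left_commute)
    also have "\<dots> \<longleftrightarrow> Q = 0" using Dp by simp
    finally show ?thesis .
  qed
  define T where "T = [U1] @ replicate (d - 2) C0 @ [U2]"
  have setsd: "set (sorted_desc d v) = v ` {..<d}" unfolding sorted_desc_def by auto
  have "L = B \<longleftrightarrow> sorted_desc d v = T"
  proof
    assume "L = B"
    then have "Q = 0" using Leq by simp
    then have z: "(v i - U1)^2 = 0" "(v k - U2)^2 = 0" "(\<Sum>j\<in>R. (v j - C0)^2) = 0"
      unfolding Q_def using sum_nonneg[of R "\<lambda>j. (v j - C0)^2"] by (smt (verit) zero_le_power2)+
    then have vi: "v i = U1" and vk: "v k = U2" by auto
    have vR: "\<And>j. j \<in> R \<Longrightarrow> v j = C0" using z(3) finR by (simp add: sum_nonneg_eq_0_iff)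
    have "mset (map v [0..<d]) = image_mset v (mset_set {..<d})"
      by (simp add: atLeast0LessThan[symmetric])
    also have "mset_set {..<d} = add_mset i (add_mset k (mset_set R))"
    proof -
      have e: "{..<d} = insert i (insert k R)" unfolding R_def using i k by auto
      have "i \<notin> insert k R" "k \<notin> R" unfolding R_def using ik by auto
      then show ?thesis using finR by (subst e) simp
    qed
    also have "image_mset v (add_mset i (add_mset k (mset_set R)))
       = add_mset (v i) (add_mset (v k) (image_mset v (mset_set R)))" by simp
    also have "image_mset v (mset_set R) = replicate_mset (d-2) C0"
    proof -
      have "image_mset v (mset_set R) = image_mset (\<lambda>_. C0) (mset_set R)"
        using vR finR by (intro image_mset_cong) auto
      also have "\<dots> = replicate_mset (card R) C0" by (simp add: image_mset_const_eq)
      also have "card R = d - 2" unfolding R_def using i k ik by (simp add: card_Diff_subset)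
      finally show ?thesis .
    qed
    finally have ms: "mset (map v [0..<d]) = mset (rev T)"
      unfolding T_def using vi vk by (simp add: add_mset_commute)
    have srt: "sorted (rev T)" unfolding T_def using ord1 ord2
      by (auto simp: sorted_append)
    have "sort (map v [0..<d]) = rev T"
      using properties_for_sort[OF ms[symmetric] srt] by simp
    then show "sorted_desc d v = T" unfolding sorted_desc_def by simp
  next
    assume h: "sorted_desc d v = T"
    then have st: "v ` {..<d} = set T" using setsd by simp
    have setT: "U1 \<in> set T" "U2 \<in> set T" "\<And>x. x \<in> set T \<Longrightarrow> U2 \<le> x \<and> x \<le> U1"
      unfolding T_def using ord1 ord2 by (auto split: if_splits)
    have "vmax = U1" unfolding vmax_def st using setT by (intro Max_eqI) auto
    moreover have "vmin = U2" unfolding vmin_def st using setT by (intro Min_eqI) auto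
    ultimately have "L = ((D-1)*U1 - (D+1)*U2)/2" unfolding L_def by simp
    also have "\<dots> = -1/D + s*(D-1)*(D^2+D+2)/D"
      unfolding U1_def U2_def using D2 by (simp add: field_simps power2_eq_square)
    also have "\<dots> = (D^2-1)/(2*D*s) - 1/D"
    proof -
      have e: "2*(s*s)*(D-1)*(D^2+D+2) = D^2-1"
      proof -
        have Pp: "D^2+D+2 > 0" using D2 by (auto intro!: add_pos_pos add_nonneg_pos)
        have "\<And>P::real. P > 0 \<Longrightarrow> 2*((D+1)/(2*P))*(D-1)*P = D^2-1"
          by (simp add: field_simps power2_eq_square)
        from this[OF Pp] show ?thesis unfolding power2_eq_square[symmetric] ssq \<sigma>_def .
      qed
      have "s*(D-1)*(D^2+D+2)/D = (D^2-1)/(2*D*s)"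
        using D2 spos by (simp add: field_simps e[symmetric])
      then show ?thesis by simp
    qed
    finally show "L = B" using Bform by simp
  qed
  then show ?thesis using part1 unfolding L_def T_def U1_def U2_def C0_def D_def by simp
qed

end
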